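(* Let $H=(V,E)$ be a graph with $|V|\ge 2$, let $F$ be a vector space of dimension $r$ over $\mathbb Z_2$, and assign to each edge $e\in E$ a vector $v(e)\in F$. Suppose that for every set $S$ with $\emptyset\ne S\subsetneq V$, the vectors $\{v(e): e\in (S,V\setminus S)\}$ span $F$, where $(S,V\setminus S)=\{e\in E: e\cap S\neq\emptyset,\ e\cap (V\setminus S)\ne\emptyset\}$. Then $m(H)\ge 2^r$.
   Context: All graphs are finite and simple. For graphs $G_1=(V,E_1)$, $G_2=(V,E_2)$ on the same vertex set, their symmetric difference is the graph $(V,E_1\oplus E_2)$, where $E_1\oplus E_2$ is the set of edges belonging to exactly one of $E_1,E_2$. For a graph $H=(V,E)$, a spanning subgraph of $H$ is a graph $(V,E')$ with $E'\subseteq E$. A connectivity code for $H$ is a collection $\mathcal G$ of distinct spanning subgraphs of $H$ such that the symmetric difference of any two distinct members of $\mathcal G$ is a connected graph on the vertex set $V$. $m(H)$ denotes the maximum cardinality of a connectivity code for $H$. *)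

theory Defs
  imports Complex_Main "HOL-Library.Z2"
begin

definition simple_graph :: "'a set \<Rightarrow> 'a set set \<Rightarrow> bool" where
  "simple_graph V E \<longleftrightarrow> finite V \<and> (\<forall>e\<in>E. e \<subseteq> V \<and> card e = 2)"

definition adj_rel :: "'a set set \<Rightarrow> ('a \<times> 'a) set" where
  "adj_rel E = {(x, y). {x, y} \<in> E}"

definition connected_graph :: "'a set \<Rightarrow> 'a set set \<Rightarrow> bool" where
  "connected_graph V E \<longleftrightarrow> V \<noteq> {} \<and> (\<forall>x\<in>V. \<forall>y\<in>V. (x, y) \<in> (adj_rel E)\<^sup>*)"

text \<open>Spanning subgraphs of (V,E) are identified with their edge sets A \<subseteq> E.\<close>
definition connectivity_code :: "'a set \<Rightarrow> 'a set set \<Rightarrow> 'a set set set \<Rightarrow> bool" where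
  "connectivity_code V E G \<longleftrightarrow> (\<forall>A\<in>G. A \<subseteq> E) \<and>
     (\<forall>A\<in>G. \<forall>B\<in>G. A \<noteq> B \<longrightarrow> connected_graph V ((A - B) \<union> (B - A)))"

definition m_code :: "'a set \<Rightarrow> 'a set set \<Rightarrow> nat" where
  "m_code V E = Max {card G | G. connectivity_code V E G}"

definition edge_cut :: "'a set \<Rightarrow> 'a set set \<Rightarrow> 'a set \<Rightarrow> 'a set set" where
  "edge_cut V E S = {e\<in>E. e \<inter> S \<noteq> {} \<and> e \<inter> (V - S) \<noteq> {}}"

end

theory Submission
  imports Defs
begin

declare add_bit_eq_xor[simp del] mult_bit_eq_and[simp del]

lemma bit_neq_iff_add: "(a::bit) \<noteq> b \<longleftrightarrow> a + b = 1"
  by (cases a; cases b; simp)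

lemma conn_lemma:
  assumes sg: "simple_graph V E" and cV: "card V \<ge> 2" and XE: "X \<subseteq> E"
    and cut: "\<forall>S. S \<noteq> {} \<and> S \<subset> V \<longrightarrow> (\<exists>e\<in>edge_cut V E S. e \<in> X)"
  shows "connected_graph V X"
proof -
  have fin: "finite V" using sg by (simp add: simple_graph_def)
  have "V \<noteq> {}" using cV by auto
  then obtain x0 where x0: "x0 \<in> V" by blast
  have sym: "(x, y) \<in> (adj_rel X)\<^sup>* \<Longrightarrow> (y, x) \<in> (adj_rel X)\<^sup>*" for x y
  proof -
    have "sym (adj_rel X)" unfolding adj_rel_def sym_def by (auto simp: insert_commute)
    moreover assume "(x, y) \<in> (adj_rel X)\<^sup>*"
    ultimately show ?thesis using sym_rtrancl symD by metis
  qed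
  define S where "S = {y\<in>V. (x0, y) \<in> (adj_rel X)\<^sup>*}"
  have SV: "S = V"
  proof (rule ccontr)
    assume "S \<noteq> V"
    moreover have "S \<subseteq> V" "S \<noteq> {}" using x0 by (auto simp: S_def)
    ultimately obtain e where e: "e \<in> edge_cut V E S" "e \<in> X" using cut by blast
    then have eE: "e \<subseteq> V" "card e = 2" "e \<inter> S \<noteq> {}" "e \<inter> (V - S) \<noteq> {}"
      using sg unfolding edge_cut_def simple_graph_def by auto
    then obtain a b where ab: "a \<in> e" "a \<in> S" "b \<in> e" "b \<in> V" "b \<notin> S" by blast
    then have "a \<noteq> b" by auto
    moreover obtain x y where "e = {x, y}" using card_2_iff[THEN iffD1, OF eE(2)] by blast
    ultimately have "e = {a, b}" using ab by blast
    then have "(a, b) \<in> adj_rel X" using e(2) by (simp add: adj_rel_def)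
    moreover have "(x0, a) \<in> (adj_rel X)\<^sup>*" using ab(2) by (simp add: S_def)
    ultimately have "(x0, b) \<in> (adj_rel X)\<^sup>*" by (rule rtrancl.rtrancl_into_rtrancl[rotated])
    then show False using ab by (auto simp: S_def)
  qed
  show ?thesis unfolding connected_graph_def
  proof (intro conjI ballI)
    show "V \<noteq> {}" by fact
    fix x y assume "x \<in> V" "y \<in> V"
    then have "(x0, x) \<in> (adj_rel X)\<^sup>*" "(x0, y) \<in> (adj_rel X)\<^sup>*" using SV by (auto simp: S_def)
    then show "(x, y) \<in> (adj_rel X)\<^sup>*" by (rule rtrancl_trans[OF sym])
  qed
qed

lemma conn_nonempty:
  assumes "connected_graph V X" "card V \<ge> 2"
  shows "X \<noteq> {}"
proof
  assume X: "X = {}"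
  have "\<not> card V \<le> Suc 0" using assms(2) by simp
  obtain x y where "x \<in> V" "y \<in> V" "x \<noteq> y"
  proof -
    have "finite V" using assms(2) card.infinite by fastforce
    then show ?thesis using \<open>\<not> card V \<le> Suc 0\<close> that by (meson card_le_Suc0_iff_eq)
  qed
  then have "(x, y) \<in> (adj_rel X)\<^sup>*" using assms(1) by (simp add: connected_graph_def)
  moreover have "adj_rel X = {}" using X by (simp add: adj_rel_def)
  ultimately show False using \<open>x \<noteq> y\<close> by simp
qed


theorem lemma2p1:
  fixes V :: "'a set" and E :: "'a set set"
    and scale :: "bit \<Rightarrow> 'v::ab_group_add \<Rightarrow> 'v"
    and r :: nat and v :: "'a set \<Rightarrow> 'v"
  assumes "simple_graph V E"
    and "card V \<ge> 2"
    and "vector_space scale"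
    and "\<exists>B. finite B \<and> module.span scale B = UNIV"
    and "vector_space.dim scale UNIV = r"
    and "\<forall>S. S \<noteq> {} \<and> S \<subset> V \<longrightarrow> module.span scale (v ` edge_cut V E S) = UNIV"
  shows "m_code V E \<ge> 2 ^ r"
proof -
  interpret vs: vector_space scale by fact
  note sg = assms(1) and cV = assms(2) and cuts = assms(6)
  obtain B0 where B0: "finite B0" "vs.span B0 = UNIV" using assms(4) by blast
  obtain B where B: "vs.independent B" "UNIV \<subseteq> vs.span B" "card B = vs.dim UNIV"
    using vs.basis_exists by blast
  have finB: "finite B" using vs.independent_span_bound[OF B0(1) B(1)] B0(2) by auto
  have cardB: "card B = r" using B(3) assms(5) by simp
  have spB: "x \<in> vs.span B" for x using B(2) by auto
  define f where "f T x = (\<Sum>b\<in>T. vs.representation B x b)" for T x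
  have f_add: "f T (x + y) = f T x + f T y" for T x y
    unfolding f_def vs.representation_add[OF B(1) spB spB] by (rule sum.distrib)
  have f_scale: "f T (scale c x) = c * f T x" for T c x
    unfolding f_def vs.representation_scale[OF B(1) spB] by (rule sum_distrib_left[symmetric])
  define A where "A T = {e\<in>E. f T (v e) = 1}" for T
  define G where "G = A ` Pow B"
  have key: "connected_graph V ((A T - A U) \<union> (A U - A T))"
    if T: "T \<subseteq> B" and U: "U \<subseteq> B" and TU: "T \<noteq> U" for T U
  proof -
    define chi where "chi x = f T x + f U x" for x
    have symd: "(A T - A U) \<union> (A U - A T) = {e\<in>E. chi (v e) = 1}"
      unfolding A_def chi_def using bit_neq_iff_add by auto
    obtain b0 where b0: "b0 \<in> B" "chi b0 = 1"
    proof -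
      obtain b0 where "b0 \<in> T - U \<or> b0 \<in> U - T" using TU by blast
      moreover have "b0 \<in> B" using calculation T U by blast
      moreover have "f W b0 = (if b0 \<in> W then 1 else 0)" if "finite W" for W
        unfolding f_def vs.representation_basis[OF B(1) \<open>b0 \<in> B\<close>]
        using that by (simp add: sum.delta)
      moreover have "finite T" "finite U" using T U finB finite_subset by auto
      ultimately show ?thesis using that unfolding chi_def by auto
    qed
    have sub: "vs.subspace {x. chi x = 0}"
    proof (rule vs.subspaceI)
      show "0 \<in> {x. chi x = 0}" by (simp add: chi_def f_def vs.representation_zero)
      show "x + y \<in> {x. chi x = 0}" if "x \<in> {x. chi x = 0}" "y \<in> {x. chi x = 0}" for x y
        using that by (simp add: chi_def f_add algebra_simps)
      show "scale c x \<in> {x. chi x = 0}" if "x \<in> {x. chi x = 0}" for c x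
        using that by (simp add: chi_def f_scale distrib_left[symmetric])
    qed
    show ?thesis unfolding symd
    proof (rule conn_lemma[OF sg cV])
      show "{e \<in> E. chi (v e) = 1} \<subseteq> E" by auto
      show "\<forall>S. S \<noteq> {} \<and> S \<subset> V \<longrightarrow> (\<exists>e\<in>edge_cut V E S. e \<in> {e \<in> E. chi (v e) = 1})"
      proof (intro allI impI)
        fix S assume S: "S \<noteq> {} \<and> S \<subset> V"
        show "\<exists>e\<in>edge_cut V E S. e \<in> {e \<in> E. chi (v e) = 1}"
        proof (rule ccontr)
          assume "\<not> ?thesis"
          then have "v ` edge_cut V E S \<subseteq> {x. chi x = 0}"
            by (auto simp: edge_cut_def)
          then have "vs.span (v ` edge_cut V E S) \<subseteq> {x. chi x = 0}"
            using vs.span_minimal sub by blast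
          moreover have "vs.span (v ` edge_cut V E S) = UNIV" using cuts S by blast
          ultimately have "chi b0 = 0" by blast
          then show False using b0(2) by simp
        qed
      qed
    qed
  qed
  have inj: "inj_on A (Pow B)"
  proof (rule inj_onI)
    fix T U assume "T \<in> Pow B" "U \<in> Pow B" "A T = A U"
    then show "T = U" using key[of T U] conn_nonempty[OF _ cV] by auto
  qed
  have code: "connectivity_code V E G"
    unfolding connectivity_code_def G_def
  proof (intro conjI ballI impI)
    fix X assume "X \<in> A ` Pow B" then show "X \<subseteq> E" by (auto simp: A_def)
  next
    fix X Y assume "X \<in> A ` Pow B" "Y \<in> A ` Pow B" "X \<noteq> Y"
    then show "connected_graph V (X - Y \<union> (Y - X))" using key by auto
  qed
  have cardG: "card G = 2 ^ r"
    unfolding G_def using card_image[OF inj] card_Pow[OF finB] cardB by simp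
  have finE: "finite E"
  proof -
    have "E \<subseteq> Pow V" using sg by (auto simp: simple_graph_def)
    then show ?thesis using sg finite_subset by (auto simp: simple_graph_def)
  qed
  have fin: "finite {card G | G. connectivity_code V E G}"
  proof (rule finite_subset[of _ "{..card (Pow E)}"])
    show "{card G | G. connectivity_code V E G} \<subseteq> {..card (Pow E)}"
    proof
      fix n assume "n \<in> {card G | G. connectivity_code V E G}"
      then obtain H where H: "n = card H" "connectivity_code V E H" by blast
      then have "H \<subseteq> Pow E" by (auto simp: connectivity_code_def)
      then have "card H \<le> card (Pow E)" using finE by (simp add: card_mono)
      then show "n \<in> {..card (Pow E)}" using H by simp
    qed
  qed simp
  have "card G \<le> m_code V E"
    unfolding m_code_def using code fin by (auto intro: Max_ge)
  then show ?thesis using cardG by simp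
qed

end
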